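(* Let $X_1,X_2$ be Banach spaces and let $\Phi$ be a Young function satisfying the Mulholland condition. Then the $F$-space $(X_1\oplus X_2,d_\Phi)$ has the Hahn–Banach extension property: for every closed subspace $M$ and every continuous linear functional $\varphi:M\to\mathbb C$ there is a continuous linear functional $\varphi':X_1\oplus X_2\to\mathbb C$ with $\varphi'|_M=\varphi$.
   Context: A Young function is a convex, left semicontinuous, even $\Phi:\mathbb R\to[0,\infty]$ with $\Phi(0)=0$, $\lim_{x\to\infty}\Phi(x)=\infty$; it satisfies the Mulholland condition if it is continuous and strictly increasing on $[0,\infty)$ and $\log\Phi(x)$ is convex as a function of $\log x$. The metric is $d_\Phi((x_1,x_2),(y_1,y_2))=\Phi^{-1}(\Phi(\|x_1-y_1\|)+\Phi(\|x_2-y_2\|))$, where $\Phi^{-1}$ is the inverse of $\Phi|_{[0,\infty)}$. *)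

theory Defs
  imports "HOL-Analysis.Analysis"
begin

text \<open>The library has no class of complex vector spaces; a complex Banach space is a
real Banach space with a complex scalar multiplication extending the real one,
satisfying the vector space axioms and absolute homogeneity of the norm.\<close>

class complex_banach = banach +
  fixes scaleC :: "complex \<Rightarrow> 'a \<Rightarrow> 'a" (infixr \<open>*\<^sub>C\<close> 75)
  assumes scaleC_add_right: "a *\<^sub>C (x + y) = a *\<^sub>C x + a *\<^sub>C y"
    and scaleC_add_left: "(a + b) *\<^sub>C x = a *\<^sub>C x + b *\<^sub>C x"
    and scaleC_scaleC: "a *\<^sub>C (b *\<^sub>C x) = (a * b) *\<^sub>C x"
    and scaleC_one: "1 *\<^sub>C x = x"
    and scaleR_scaleC: "scaleR r x = complex_of_real r *\<^sub>C x"
    and norm_scaleC: "norm (a *\<^sub>C x) = cmod a * norm x"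

text \<open>Young functions are taken real-valued: the Mulholland condition (continuity and
strict monotonicity on [0,\<infinity>)) forces finiteness of \<Phi> everywhere, so nothing is lost.\<close>

definition young_function :: "(real \<Rightarrow> real) \<Rightarrow> bool" where
  "young_function \<Phi> \<longleftrightarrow>
     convex_on UNIV \<Phi> \<and>
     (\<forall>x. continuous (at_left x) \<Phi>) \<and>
     (\<forall>x. \<Phi> (- x) = \<Phi> x) \<and>
     (\<forall>x. \<Phi> x \<ge> 0) \<and>
     \<Phi> 0 = 0 \<and>
     filterlim \<Phi> at_top at_top"

definition mulholland :: "(real \<Rightarrow> real) \<Rightarrow> bool" where
  "mulholland \<Phi> \<longleftrightarrow>
     continuous_on {0..} \<Phi> \<and>
     strict_mono_on {0..} \<Phi> \<and>
     convex_on UNIV (\<lambda>t. ln (\<Phi> (exp t)))"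

definition Phi_inv :: "(real \<Rightarrow> real) \<Rightarrow> real \<Rightarrow> real" where
  "Phi_inv \<Phi> y = (THE x. x \<ge> 0 \<and> \<Phi> x = y)"

definition dPhi :: "(real \<Rightarrow> real) \<Rightarrow> ('a::real_normed_vector \<times> 'b::real_normed_vector)
                     \<Rightarrow> ('a \<times> 'b) \<Rightarrow> real" where
  "dPhi \<Phi> x y = Phi_inv \<Phi> (\<Phi> (norm (fst x - fst y)) + \<Phi> (norm (snd x - snd y)))"

definition csubspace_sum :: "('a::complex_banach \<times> 'b::complex_banach) set \<Rightarrow> bool" where
  "csubspace_sum M \<longleftrightarrow> (0, 0) \<in> M \<and>
     (\<forall>x\<in>M. \<forall>y\<in>M. x + y \<in> M) \<and>
     (\<forall>c. \<forall>x\<in>M. (c *\<^sub>C fst x, c *\<^sub>C snd x) \<in> M)"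

definition clinear_on_sum :: "('a::complex_banach \<times> 'b::complex_banach) set
                               \<Rightarrow> ('a \<times> 'b \<Rightarrow> complex) \<Rightarrow> bool" where
  "clinear_on_sum M f \<longleftrightarrow>
     (\<forall>x\<in>M. \<forall>y\<in>M. f (x + y) = f x + f y) \<and>
     (\<forall>c. \<forall>x\<in>M. f (c *\<^sub>C fst x, c *\<^sub>C snd x) = c * f x)"

definition dPhi_closed :: "(real \<Rightarrow> real) \<Rightarrow> ('a::real_normed_vector \<times> 'b::real_normed_vector) set \<Rightarrow> bool" where
  "dPhi_closed \<Phi> M \<longleftrightarrow> (\<forall>x. (\<forall>e>0. \<exists>y\<in>M. dPhi \<Phi> x y < e) \<longrightarrow> x \<in> M)"

definition dPhi_continuous_on :: "(real \<Rightarrow> real) \<Rightarrow> ('a::real_normed_vector \<times> 'b::real_normed_vector) set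
                                    \<Rightarrow> ('a \<times> 'b \<Rightarrow> complex) \<Rightarrow> bool" where
  "dPhi_continuous_on \<Phi> M f \<longleftrightarrow>
     (\<forall>x\<in>M. \<forall>e>0. \<exists>d>0. \<forall>y\<in>M. dPhi \<Phi> x y < d \<longrightarrow> cmod (f y - f x) < e)"

end

theory Submission
  imports Defs
begin

definition goodG :: "'v::real_vector set \<Rightarrow> ('v \<Rightarrow> real) \<Rightarrow> ('v \<Rightarrow> real) \<Rightarrow> ('v \<times> real) set \<Rightarrow> bool" where
  "goodG M f p G \<longleftrightarrow> (0,0) \<in> G \<and>
     (\<forall>x a y b. (x,a)\<in>G \<longrightarrow> (y,b)\<in>G \<longrightarrow> (x+y,a+b)\<in>G) \<and>
     (\<forall>c x a. (x,a)\<in>G \<longrightarrow> (c *\<^sub>R x, c*a)\<in>G) \<and>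
     (\<forall>x a b. (x,a)\<in>G \<longrightarrow> (x,b)\<in>G \<longrightarrow> a=b) \<and>
     (\<forall>x\<in>M. (x, f x)\<in>G) \<and> (\<forall>x a. (x,a)\<in>G \<longrightarrow> a \<le> p x)"

lemma goodG_D:
  assumes "goodG M f p G"
  shows "(0,0)\<in>G" "\<And>x a y b. (x,a)\<in>G \<Longrightarrow> (y,b)\<in>G \<Longrightarrow> (x+y,a+b)\<in>G"
    "\<And>c x a. (x,a)\<in>G \<Longrightarrow> (c *\<^sub>R x, c*a)\<in>G" "\<And>x a b. (x,a)\<in>G \<Longrightarrow> (x,b)\<in>G \<Longrightarrow> a=b"
    "\<And>x. x\<in>M \<Longrightarrow> (x,f x)\<in>G" "\<And>x a. (x,a)\<in>G \<Longrightarrow> a \<le> p x"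
  using assms unfolding goodG_def by blast+

lemma goodG_extend:
  fixes G :: "('v::real_vector \<times> real) set"
  assumes good: "goodG M f p G" and x0: "\<forall>a. (x0,a) \<notin> G"
  and padd: "\<And>x y. p(x+y) \<le> p x + p y" and psc: "\<And>c x. c \<ge> 0 \<Longrightarrow> p (c *\<^sub>R x) = c * p x"
  shows "\<exists>G'. goodG M f p G' \<and> G \<subseteq> G' \<and> G' \<noteq> G"
proof -
  note g = good[unfolded goodG_def]
  have G0: "(0,0) \<in> G" using g by blast
  have Gadd: "\<And>x a y b. (x,a)\<in>G \<Longrightarrow> (y,b)\<in>G \<Longrightarrow> (x+y,a+b)\<in>G" using g by blast
  have Gsc: "\<And>c x a. (x,a)\<in>G \<Longrightarrow> (c *\<^sub>R x, c*a)\<in>G" using g by blast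
  have Gfun: "\<And>x a b. (x,a)\<in>G \<Longrightarrow> (x,b)\<in>G \<Longrightarrow> a=b" using g by blast
  have GM: "\<And>x. x\<in>M \<Longrightarrow> (x, f x)\<in>G" using g by blast
  have Gp: "\<And>x a. (x,a)\<in>G \<Longrightarrow> a \<le> p x" using g by blast
  have key: "a - p (y - x0) \<le> p (z + x0) - b" if "(y,a)\<in>G" "(z,b)\<in>G" for y a z b
  proof -
    have "(y+z, a+b) \<in> G" using Gadd that by blast
    hence "a + b \<le> p (y+z)" using Gp by blast
    also have "p (y+z) = p ((y - x0) + (z + x0))" by (simp add: algebra_simps)
    also have "\<dots> \<le> p (y - x0) + p (z + x0)" by (rule padd)
    finally show ?thesis by simp
  qed
  define S where "S = {a - p (y - x0) | y a. (y,a)\<in>G}"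
  define c where "c = Sup S"
  have Sne: "S \<noteq> {}" using G0 unfolding S_def by blast
  have Sbdd: "bdd_above S" unfolding S_def bdd_above_def using key[OF _ G0] by auto
  have c1: "a - p (y - x0) \<le> c" if "(y,a)\<in>G" for y a
    unfolding c_def by (rule cSup_upper[OF _ Sbdd]) (use that S_def in blast)
  have c2: "c \<le> p (z + x0) - b" if "(z,b)\<in>G" for z b
    unfolding c_def by (rule cSup_least[OF Sne]) (use that key S_def in auto)
  define G' where "G' = {(y + t *\<^sub>R x0, a + t*c) | y a t. (y,a)\<in>G}"
  have sub: "G \<subseteq> G'"
  proof
    fix q assume "q \<in> G"
    then obtain y a where "q = (y,a)" "(y,a)\<in>G" by (cases q) auto
    moreover have "(y + 0 *\<^sub>R x0, a + 0*c) \<in> G'" unfolding G'_def using calculation by blast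
    ultimately show "q \<in> G'" by simp
  qed
  have "(0 + 1 *\<^sub>R x0, 0 + 1*c) \<in> G'" unfolding G'_def using G0 by blast
  hence "(x0, c) \<in> G'" by simp
  hence neq: "G' \<noteq> G" using x0 by blast
  have "goodG M f p G'"
    unfolding goodG_def
  proof (intro conjI allI impI ballI)
    show "(0,0) \<in> G'" using sub G0 by blast
  next
    fix x a y b assume "(x,a)\<in>G'" "(y,b)\<in>G'"
    then obtain x1 a1 t1 y1 b1 t2 where "x = x1 + t1 *\<^sub>R x0" "a = a1 + t1*c" "(x1,a1)\<in>G"
      "y = y1 + t2 *\<^sub>R x0" "b = b1 + t2*c" "(y1,b1)\<in>G" unfolding G'_def by blast
    moreover have "(x1+y1, a1+b1)\<in>G" using Gadd calculation by blast
    moreover have "((x1+y1) + (t1+t2) *\<^sub>R x0, (a1+b1) + (t1+t2)*c) \<in> G'" unfolding G'_def using calculation by blast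
    ultimately show "(x+y, a+b) \<in> G'" by (simp add: algebra_simps)
  next
    fix d x a assume "(x,a)\<in>G'"
    then obtain x1 a1 t1 where "x = x1 + t1 *\<^sub>R x0" "a = a1 + t1*c" "(x1,a1)\<in>G" unfolding G'_def by blast
    moreover have "(d *\<^sub>R x1, d*a1)\<in>G" using Gsc calculation by blast
    moreover have "(d *\<^sub>R x1 + (d*t1) *\<^sub>R x0, d*a1 + (d*t1)*c) \<in> G'" unfolding G'_def using calculation by blast
    ultimately show "(d *\<^sub>R x, d*a) \<in> G'" by (simp add: algebra_simps)
  next
    fix x a b assume "(x,a)\<in>G'" "(x,b)\<in>G'"
    then obtain x1 a1 t1 y1 b1 t2 where e: "x = x1 + t1 *\<^sub>R x0" "a = a1 + t1*c" "(x1,a1)\<in>G"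
      "x = y1 + t2 *\<^sub>R x0" "b = b1 + t2*c" "(y1,b1)\<in>G" unfolding G'_def by blast
    have "(y1 - x1, b1 - a1) \<in> G"
      using Gadd[OF e(6) Gsc[OF e(3), of "-1"]] by simp
    have tt: "t1 = t2"
    proof (rule ccontr)
      assume ne: "t1 \<noteq> t2"
      have "(t1 - t2) *\<^sub>R x0 = y1 - x1" using e(1,4) by (simp add: algebra_simps)
      hence "(1/(t1-t2)) *\<^sub>R (y1 - x1) = (1/(t1-t2)) *\<^sub>R ((t1 - t2) *\<^sub>R x0)" by simp
      also have "\<dots> = x0" using ne by simp
      finally have "x0 = (1/(t1-t2)) *\<^sub>R (y1 - x1)" by simp
      thus False using Gsc[OF \<open>(y1 - x1, b1 - a1) \<in> G\<close>, of "1/(t1-t2)"] x0 by simp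
    qed
    hence "x1 = y1" using e by simp
    hence "a1 = b1" using Gfun e by blast
    thus "a = b" using e tt by simp
  next
    fix x assume "x \<in> M" thus "(x, f x) \<in> G'" using GM sub by blast
  next
    fix x a assume "(x,a)\<in>G'"
    then obtain y a1 t where e: "x = y + t *\<^sub>R x0" "a = a1 + t*c" "(y,a1)\<in>G" unfolding G'_def by blast
    consider "t = 0" | "t > 0" | "t < 0" by linarith
    thus "a \<le> p x"
    proof cases
      case 1 thus ?thesis using e Gp by simp
    next
      case 2
      have "((1/t) *\<^sub>R y, (1/t)*a1) \<in> G" using Gsc e by blast
      from c2[OF this] have "c \<le> p ((1/t) *\<^sub>R y + x0) - (1/t)*a1" .
      also have "(1/t) *\<^sub>R y + x0 = (1/t) *\<^sub>R x" using 2 e by (simp add: algebra_simps)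
      also have "p ((1/t) *\<^sub>R x) = (1/t) * p x" using 2 psc by simp
      finally have "t * c \<le> t * ((1/t) * p x - (1/t)*a1)" using 2 by simp
      hence "t * c \<le> p x - a1" using 2 by (simp add: algebra_simps)
      thus ?thesis using e by simp
    next
      case 3
      define s where "s = - t"
      have s: "s > 0" using 3 s_def by simp
      have "((1/s) *\<^sub>R y, (1/s)*a1) \<in> G" using Gsc e by blast
      from c1[OF this] have "(1/s)*a1 - p ((1/s) *\<^sub>R y - x0) \<le> c" .
      moreover have "(1/s) *\<^sub>R y - x0 = (1/s) *\<^sub>R x" using s e s_def by (simp add: algebra_simps)
      moreover have "p ((1/s) *\<^sub>R x) = (1/s) * p x" using s psc by simp
      ultimately have "(1/s)*a1 - (1/s) * p x \<le> c" by simp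
      hence "s * ((1/s)*a1 - (1/s) * p x) \<le> s * c" using s by (simp add: mult_left_mono)
      hence "a1 - p x \<le> s * c" using s by (simp add: algebra_simps)
      thus ?thesis using e s_def by simp
    qed
  qed
  thus ?thesis using sub neq by blast
qed

lemma real_hb:
  fixes M :: "'v::real_vector set" and f p :: "'v \<Rightarrow> real"
  assumes M0: "0 \<in> M" and Madd: "\<And>x y. x\<in>M \<Longrightarrow> y\<in>M \<Longrightarrow> x+y\<in>M"
    and Msc: "\<And>c x. x\<in>M \<Longrightarrow> c *\<^sub>R x \<in> M"
    and fadd: "\<And>x y. x\<in>M \<Longrightarrow> y\<in>M \<Longrightarrow> f(x+y) = f x + f y"
    and fsc: "\<And>c x. x\<in>M \<Longrightarrow> f (c *\<^sub>R x) = c * f x"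
    and fp: "\<And>x. x\<in>M \<Longrightarrow> f x \<le> p x"
    and padd: "\<And>x y. p(x+y) \<le> p x + p y" and psc: "\<And>c x. c \<ge> 0 \<Longrightarrow> p (c *\<^sub>R x) = c * p x"
  shows "\<exists>g. (\<forall>x y. g(x+y) = g x + g y) \<and> (\<forall>c x. g (c *\<^sub>R x) = c * g x) \<and>
             (\<forall>x\<in>M. g x = f x) \<and> (\<forall>x. g x \<le> p x)"
proof -
  define A where "A = {G. goodG M f p G}"
  define G0 where "G0 = {(x, f x) | x. x\<in>M}"
  have f0: "f 0 = 0" using fsc[OF M0, of 0] by simp
  have G0A: "G0 \<in> A" unfolding A_def goodG_def G0_def
    using M0 f0 Madd fadd Msc fsc fp by auto
  have "\<forall>C\<in>chains A. \<exists>U\<in>A. \<forall>X\<in>C. X \<subseteq> U"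
  proof
    fix C assume C: "C \<in> chains A"
    show "\<exists>U\<in>A. \<forall>X\<in>C. X \<subseteq> U"
    proof (cases "C = {}")
      case True thus ?thesis using G0A by blast
    next
      case False
      have CA: "C \<subseteq> A" and ch: "\<And>X Y. X\<in>C \<Longrightarrow> Y\<in>C \<Longrightarrow> X \<subseteq> Y \<or> Y \<subseteq> X"
        using C unfolding chains_def chain_subset_def by auto
      have gd: "\<And>X. X \<in> C \<Longrightarrow> goodG M f p X" using CA A_def by blast
      have two: "\<exists>Z\<in>C. P \<in> Z \<and> Q \<in> Z" if PQ: "P \<in> \<Union>C" "Q \<in> \<Union>C" for P Q
      proof -
        obtain X Y where "X\<in>C" "Y\<in>C" "P\<in>X" "Q\<in>Y" using PQ by blast
        thus ?thesis using ch[of X Y] by blast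
      qed
      obtain X1 where X1: "X1 \<in> C" using False by blast
      have "goodG M f p (\<Union>C)"
        unfolding goodG_def
      proof (intro conjI allI impI ballI)
        show "(0,0) \<in> \<Union>C" using goodG_D(1)[OF gd[OF X1]] X1 by blast
      next
        fix x a y b assume "(x,a)\<in>\<Union>C" "(y,b)\<in>\<Union>C"
        then obtain Z where Z: "Z\<in>C" "(x,a)\<in>Z" "(y,b)\<in>Z" using two by blast
        have "(x+y,a+b)\<in>Z" by (rule goodG_D(2)[OF gd[OF Z(1)] Z(2,3)])
        thus "(x+y,a+b)\<in>\<Union>C" using Z(1) by blast
      next
        fix d x a assume "(x,a)\<in>\<Union>C"
        then obtain Z where Z: "Z\<in>C" "(x,a)\<in>Z" by blast
        have "(d *\<^sub>R x, d*a)\<in>Z" by (rule goodG_D(3)[OF gd[OF Z(1)] Z(2)])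
        thus "(d *\<^sub>R x, d*a)\<in>\<Union>C" using Z(1) by blast
      next
        fix x a b assume "(x,a)\<in>\<Union>C" "(x,b)\<in>\<Union>C"
        then obtain Z where Z: "Z\<in>C" "(x,a)\<in>Z" "(x,b)\<in>Z" using two by blast
        show "a = b" by (rule goodG_D(4)[OF gd[OF Z(1)] Z(2,3)])
      next
        fix x assume "x\<in>M" thus "(x, f x) \<in> \<Union>C" using goodG_D(5)[OF gd[OF X1]] X1 by blast
      next
        fix x a assume "(x,a)\<in>\<Union>C"
        then obtain Z where Z: "Z\<in>C" "(x,a)\<in>Z" by blast
        show "a \<le> p x" by (rule goodG_D(6)[OF gd[OF Z(1)] Z(2)])
      qed
      thus ?thesis unfolding A_def by blast
    qed
  qed
  from Zorn_Lemma2[OF this] obtain G where GA: "G \<in> A" and max: "\<forall>X\<in>A. G \<subseteq> X \<longrightarrow> X = G" by blast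
  have good: "goodG M f p G" using GA A_def by blast
  have tot: "\<exists>a. (x,a) \<in> G" for x
  proof (rule ccontr)
    assume "\<not> ?thesis"
    then obtain G' where "goodG M f p G'" "G \<subseteq> G'" "G' \<noteq> G"
      using goodG_extend[OF good _ padd psc] by blast
    thus False using max A_def by blast
  qed
  note g = goodG_D[OF good]
  define h where "h x = (THE a. (x,a) \<in> G)" for x
  have hu: "h x = a" if a: "(x,a)\<in>G" for x a
    unfolding h_def
  proof (rule the_equality)
    show "(x,a)\<in>G" by fact
    fix b assume "(x,b)\<in>G" thus "b = a" using g(4)[OF _ a] by blast
  qed
  have hG: "(x, h x) \<in> G" for x
  proof -
    obtain a where a: "(x,a)\<in>G" using tot by blast
    thus ?thesis using hu[OF a] by simp
  qed
  show ?thesis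
  proof (intro exI conjI allI ballI)
    fix x y show "h (x+y) = h x + h y" by (rule hu[OF g(2)[OF hG hG]])
  next
    fix c x show "h (c *\<^sub>R x) = c * h x" by (rule hu[OF g(3)[OF hG]])
  next
    fix x assume "x\<in>M" thus "h x = f x" using hu[OF g(5)] by blast
  next
    fix x show "h x \<le> p x" by (rule g(6)[OF hG])
  qed
qed


lemma phi_props:
  assumes "young_function \<Phi>" "mulholland \<Phi>"
  shows "\<Phi> 0 = 0" "\<And>x. \<Phi> x \<ge> 0" "strict_mono_on {0..} \<Phi>" "continuous_on {0..} \<Phi>"
    "filterlim \<Phi> at_top at_top"
  using assms unfolding young_function_def mulholland_def by auto

lemma phi_le:
  assumes "young_function \<Phi>" "mulholland \<Phi>" "x \<ge> 0" "y \<ge> 0" "\<Phi> x \<le> \<Phi> y"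
  shows "x \<le> y"
proof (rule ccontr)
  assume "\<not> x \<le> y"
  hence "\<Phi> y < \<Phi> x" using strict_mono_onD[OF phi_props(3)[OF assms(1,2)], of y x] assms by auto
  thus False using assms by simp
qed

lemma Phi_inv_prop:
  assumes "young_function \<Phi>" "mulholland \<Phi>" "y \<ge> 0"
  shows "Phi_inv \<Phi> y \<ge> 0 \<and> \<Phi> (Phi_inv \<Phi> y) = y"
proof -
  note P = phi_props[OF assms(1,2)]
  have "\<forall>\<^sub>F x in at_top. y \<le> \<Phi> x" using P(5) unfolding filterlim_at_top by blast
  then obtain N where N: "\<And>n. n \<ge> N \<Longrightarrow> y \<le> \<Phi> n" unfolding eventually_at_top_linorder by blast
  define T where "T = max N 0"
  have cont: "continuous_on {0..T} \<Phi>" using P(4) by (rule continuous_on_subset) auto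
  have h1: "\<Phi> 0 \<le> y" using P(1) assms(3) by simp
  have h2: "y \<le> \<Phi> T" using N T_def by simp
  have h3: "0 \<le> T" by (simp add: T_def)
  obtain x where x: "0 \<le> x" "x \<le> T" "\<Phi> x = y" using IVT'[OF h1 h2 h3 cont] by blast
  have "Phi_inv \<Phi> y = x" unfolding Phi_inv_def
  proof (rule the_equality)
    show "0 \<le> x \<and> \<Phi> x = y" using x by simp
  next
    fix z assume z: "0 \<le> z \<and> \<Phi> z = y"
    have "z \<le> x" by (rule phi_le[OF assms(1,2)]) (use z x in auto)
    moreover have "x \<le> z" by (rule phi_le[OF assms(1,2)]) (use z x in auto)
    ultimately show "z = x" by simp
  qed
  thus ?thesis using x by simp
qed

lemma dPhi_ge:
  assumes "young_function \<Phi>" "mulholland \<Phi>"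
  shows "norm (fst x - fst y) \<le> dPhi \<Phi> x y" "norm (snd x - snd y) \<le> dPhi \<Phi> x y"
proof -
  note P = phi_props[OF assms]
  define v where "v = \<Phi> (norm (fst x - fst y)) + \<Phi> (norm (snd x - snd y))"
  have v0: "v \<ge> 0" using P(2) v_def by (simp add: add_nonneg_nonneg)
  note I = Phi_inv_prop[OF assms v0]
  have d: "dPhi \<Phi> x y = Phi_inv \<Phi> v" unfolding dPhi_def v_def by simp
  show "norm (fst x - fst y) \<le> dPhi \<Phi> x y" unfolding d
    by (rule phi_le[OF assms]) (use I P(2)[of "norm (snd x - snd y)"] v_def in auto)
  show "norm (snd x - snd y) \<le> dPhi \<Phi> x y" unfolding d
    by (rule phi_le[OF assms]) (use I P(2)[of "norm (fst x - fst y)"] v_def in auto)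
qed

lemma dPhi_small:
  assumes "young_function \<Phi>" "mulholland \<Phi>" "d > 0"
  shows "\<exists>\<delta>>0. \<forall>x y. norm (fst x - fst y) < \<delta> \<longrightarrow> norm (snd x - snd y) < \<delta> \<longrightarrow> dPhi \<Phi> x y < d"
proof -
  note P = phi_props[OF assms(1,2)]
  have "\<Phi> 0 < \<Phi> d" by (rule strict_mono_onD[OF P(3)]) (use assms(3) in auto)
  hence Pd: "\<Phi> d > 0" using P(1) by simp
  have "\<exists>\<delta>>0. \<forall>s\<in>{0..}. dist s 0 < \<delta> \<longrightarrow> dist (\<Phi> s) (\<Phi> 0) < \<Phi> d / 2"
    using continuous_on_iff[THEN iffD1, OF P(4), rule_format, of 0 "\<Phi> d/2"] Pd by simp
  then obtain \<delta> where \<delta>: "\<delta> > 0" "\<And>s. s \<in> {0..} \<Longrightarrow> dist s 0 < \<delta> \<Longrightarrow> dist (\<Phi> s) (\<Phi> 0) < \<Phi> d / 2"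
    by blast
  have sm: "\<Phi> s < \<Phi> d / 2" if "0 \<le> s" "s < \<delta>" for s
    using \<delta>(2)[of s] that P(1) P(2)[of s] by (simp add: dist_real_def)
  show ?thesis
  proof (intro exI[of _ \<delta>] conjI allI impI)
    show "\<delta> > 0" by fact
    fix x y :: "'a::real_normed_vector \<times> 'b::real_normed_vector"
    assume a: "norm (fst x - fst y) < \<delta>" "norm (snd x - snd y) < \<delta>"
    define v where "v = \<Phi> (norm (fst x - fst y)) + \<Phi> (norm (snd x - snd y))"
    have v0: "v \<ge> 0" using P(2) v_def by (simp add: add_nonneg_nonneg)
    have vd: "v < \<Phi> d" using sm[OF _ a(1)] sm[OF _ a(2)] v_def by simp
    note I = Phi_inv_prop[OF assms(1,2) v0]
    have dd: "dPhi \<Phi> x y = Phi_inv \<Phi> v" unfolding dPhi_def v_def by simp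
    show "dPhi \<Phi> x y < d" unfolding dd
    proof (rule ccontr)
      assume "\<not> Phi_inv \<Phi> v < d"
      hence le: "d \<le> Phi_inv \<Phi> v" by linarith
      have "\<Phi> d \<le> \<Phi> (Phi_inv \<Phi> v)"
      proof (cases "d = Phi_inv \<Phi> v")
        case True thus ?thesis by simp
      next
        case False
        hence "d < Phi_inv \<Phi> v" using le by linarith
        moreover have "d \<in> {0..}" "Phi_inv \<Phi> v \<in> {0..}" using assms(3) I by auto
        ultimately show ?thesis using strict_mono_onD[OF P(3)] by (meson less_imp_le)
      qed
      thus False using I vd by simp
    qed
  qed
qed


lemma scaleC_decomp: "(c::complex) *\<^sub>C (a::'a::complex_banach) = Re c *\<^sub>R a + Im c *\<^sub>R (\<i> *\<^sub>C a)"
proof -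
  have "Re c *\<^sub>R a + Im c *\<^sub>R (\<i> *\<^sub>C a) = complex_of_real (Re c) *\<^sub>C a + complex_of_real (Im c) *\<^sub>C (\<i> *\<^sub>C a)"
    by (simp add: scaleR_scaleC)
  also have "\<dots> = complex_of_real (Re c) *\<^sub>C a + (complex_of_real (Im c) * \<i>) *\<^sub>C a"
    by (simp add: scaleC_scaleC)
  also have "\<dots> = (complex_of_real (Re c) + complex_of_real (Im c) * \<i>) *\<^sub>C a"
    by (simp add: scaleC_add_left)
  also have "complex_of_real (Re c) + complex_of_real (Im c) * \<i> = c"
    by (simp add: complex_eq_iff)
  finally show ?thesis by simp
qed

lemma scaleC_pair_decomp:
  "((c::complex) *\<^sub>C fst x, c *\<^sub>C snd x) = Re c *\<^sub>R (x::'a::complex_banach \<times> 'b::complex_banach)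
     + Im c *\<^sub>R (\<i> *\<^sub>C fst x, \<i> *\<^sub>C snd x)"
  by (cases x) (simp add: scaleC_decomp[of c])

lemma scaleR_pair_C:
  "r *\<^sub>R (x::'a::complex_banach \<times> 'b::complex_banach) = (complex_of_real r *\<^sub>C fst x, complex_of_real r *\<^sub>C snd x)"
  by (cases x) (simp add: scaleR_scaleC)

lemma norm_i_scaleC: "norm (\<i> *\<^sub>C (a::'a::complex_banach)) = norm a"
  by (simp add: norm_scaleC)

lemma scaleC_add_pair: "(c *\<^sub>C fst (x + y), c *\<^sub>C snd (x + y)) =
   (c *\<^sub>C fst x, c *\<^sub>C snd x) + (c *\<^sub>C fst y, c *\<^sub>C snd y)"
  for x y :: "'a::complex_banach \<times> 'b::complex_banach"
  by (simp add: scaleC_add_right)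

theorem mainTheorem6:
  fixes \<Phi> :: "real \<Rightarrow> real"
    and M :: "('a::complex_banach \<times> 'b::complex_banach) set"
    and \<phi> :: "'a \<times> 'b \<Rightarrow> complex"
  assumes "young_function \<Phi>" and "mulholland \<Phi>"
    and "csubspace_sum M" and "dPhi_closed \<Phi> M"
    and "clinear_on_sum M \<phi>" and "dPhi_continuous_on \<Phi> M \<phi>"
  shows "\<exists>\<phi>'. clinear_on_sum UNIV \<phi>' \<and> dPhi_continuous_on \<Phi> UNIV \<phi>' \<and>
              (\<forall>x\<in>M. \<phi>' x = \<phi> x)"
proof -
  note YM = assms(1,2)
  have M0: "(0,0) \<in> M" using assms(3) unfolding csubspace_sum_def by blast
  have Madd: "\<And>x y. x\<in>M \<Longrightarrow> y\<in>M \<Longrightarrow> x+y\<in>M" using assms(3) unfolding csubspace_sum_def by blast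
  have Msc: "\<And>c x. x\<in>M \<Longrightarrow> (c *\<^sub>C fst x, c *\<^sub>C snd x) \<in> M" using assms(3) unfolding csubspace_sum_def by blast
  have fadd: "\<And>x y. x\<in>M \<Longrightarrow> y\<in>M \<Longrightarrow> \<phi> (x+y) = \<phi> x + \<phi> y" using assms(5) unfolding clinear_on_sum_def by blast
  have fsc: "\<And>c x. x\<in>M \<Longrightarrow> \<phi> (c *\<^sub>C fst x, c *\<^sub>C snd x) = c * \<phi> x" using assms(5) unfolding clinear_on_sum_def by blast
  have f0: "\<phi> (0,0) = 0" using fadd[OF M0 M0] by simp
  obtain d where d: "d > 0" "\<And>y. y\<in>M \<Longrightarrow> dPhi \<Phi> (0,0) y < d \<Longrightarrow> cmod (\<phi> y - \<phi> (0,0)) < 1"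
    using assms(6) M0 unfolding dPhi_continuous_on_def by (meson zero_less_one)
  obtain \<delta> where \<delta>: "\<delta> > 0"
    "\<And>x y :: 'a \<times> 'b. norm (fst x - fst y) < \<delta> \<Longrightarrow> norm (snd x - snd y) < \<delta> \<Longrightarrow> dPhi \<Phi> x y < d"
    using dPhi_small[OF YM d(1)] by blast
  define K where "K = 2 / \<delta>"
  have K: "K > 0" using \<delta> K_def by simp
  define p where "p x = K * (norm (fst x) + norm (snd x))" for x :: "'a \<times> 'b"
  have bound: "cmod (\<phi> y) \<le> p y" if y: "y \<in> M" for y
  proof -
    define s where "s = norm (fst y) + norm (snd y)"
    show ?thesis
    proof (cases "s = 0")
      case True
      hence "norm (fst y) = 0 \<and> norm (snd y) = 0"
        using s_def norm_ge_zero[of "fst y"] norm_ge_zero[of "snd y"] by linarith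
      hence "fst y = 0" "snd y = 0" by simp_all
      hence "y = (0,0)" by (simp add: prod_eq_iff)
      thus ?thesis using f0 p_def K by simp
    next
      case False
      hence s: "s > 0" using s_def by (simp add: add_nonneg_nonneg order_less_le)
      define r where "r = \<delta> / (2 * s)"
      have r: "r > 0" using s \<delta> r_def by simp
      define y' where "y' = (complex_of_real r *\<^sub>C fst y, complex_of_real r *\<^sub>C snd y)"
      have y'M: "y' \<in> M" using Msc y y'_def by blast
      have n1: "norm (fst y') = r * norm (fst y)" using r y'_def by (simp add: norm_scaleC)
      have n2: "norm (snd y') = r * norm (snd y)" using r y'_def by (simp add: norm_scaleC)
      have "r * s = \<delta> / 2" using s r_def by simp
      hence rs: "r * norm (fst y) + r * norm (snd y) = \<delta> / 2" using s_def by (simp add: algebra_simps)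
      have "r * norm (fst y) \<ge> 0" "r * norm (snd y) \<ge> 0" using r by simp_all
      hence "norm (fst y') < \<delta>" "norm (snd y') < \<delta>" using n1 n2 rs \<delta>(1) by linarith+
      hence "dPhi \<Phi> (0,0) y' < d" using \<delta>(2)[of "(0,0)" y'] by simp
      hence "cmod (\<phi> y') < 1" using d(2)[OF y'M] f0 by simp
      moreover have "\<phi> y' = complex_of_real r * \<phi> y" using fsc[OF y] y'_def by simp
      ultimately have "r * cmod (\<phi> y) < 1" using r by (simp add: norm_mult)
      hence "cmod (\<phi> y) < 1 / r" using r by (simp add: field_simps)
      also have "1 / r = K * s" using s \<delta>(1) unfolding r_def K_def by (simp add: field_simps)
      finally show ?thesis unfolding p_def s_def by simp
    qed
  qed
  have "\<exists>g. (\<forall>x y. g(x+y) = g x + g y) \<and> (\<forall>c x. g (c *\<^sub>R x) = c * g x) \<and>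
             (\<forall>x\<in>M. g x = Re (\<phi> x)) \<and> (\<forall>x. g x \<le> p x)"
  proof (rule real_hb)
    show "0 \<in> M" using M0 by (simp add: zero_prod_def)
    show "\<And>x y. x\<in>M \<Longrightarrow> y\<in>M \<Longrightarrow> x+y\<in>M" by (rule Madd)
    show "\<And>c x. x\<in>M \<Longrightarrow> c *\<^sub>R x \<in> M" unfolding scaleR_pair_C using Msc by blast
    show "\<And>x y. x\<in>M \<Longrightarrow> y\<in>M \<Longrightarrow> Re (\<phi> (x+y)) = Re (\<phi> x) + Re (\<phi> y)" using fadd by simp
    show "\<And>c x. x\<in>M \<Longrightarrow> Re (\<phi> (c *\<^sub>R x)) = c * Re (\<phi> x)" unfolding scaleR_pair_C using fsc by simp
    show "\<And>x. x\<in>M \<Longrightarrow> Re (\<phi> x) \<le> p x" using bound complex_Re_le_cmod order_trans by blast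
    show "\<And>x y. p (x+y) \<le> p x + p y"
    proof -
      fix x y :: "'a \<times> 'b"
      have "norm (fst (x+y)) + norm (snd (x+y)) \<le> (norm (fst x) + norm (snd x)) + (norm (fst y) + norm (snd y))"
        using norm_triangle_ineq[of "fst x" "fst y"] norm_triangle_ineq[of "snd x" "snd y"] by simp
      thus "p (x+y) \<le> p x + p y" unfolding p_def using K
        by (metis distrib_left mult_left_mono order_less_imp_le)
    qed
    show "\<And>c x. c \<ge> 0 \<Longrightarrow> p (c *\<^sub>R x) = c * p x" unfolding p_def by (simp add: algebra_simps)
  qed
  then obtain U where Uadd: "\<And>x y. U (x+y) = U x + U y" and Usc: "\<And>c x. U (c *\<^sub>R x) = c * U x"
    and UM: "\<And>x. x\<in>M \<Longrightarrow> U x = Re (\<phi> x)" and Up: "\<And>x. U x \<le> p x" by blast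
  define J where "J x = (\<i> *\<^sub>C fst x, \<i> *\<^sub>C snd x)" for x :: "'a \<times> 'b"
  define \<psi> where "\<psi> x = complex_of_real (U x) - \<i> * complex_of_real (U (J x))" for x
  have Uneg: "U (- x) = - U x" for x using Usc[of "-1" x] by simp
  have pneg: "p (- x) = p x" for x unfolding p_def by simp
  have Uabs: "\<bar>U x\<bar> \<le> p x" for x using Up[of x] Up[of "-x"] Uneg[of x] pneg[of x] by linarith
  have pJ: "p (J x) = p x" for x unfolding p_def J_def by (simp add: norm_i_scaleC)
  have Jadd: "J (x+y) = J x + J y" for x y unfolding J_def by (simp add: scaleC_add_right)
  have lin: "clinear_on_sum UNIV \<psi>"
    unfolding clinear_on_sum_def
  proof (intro conjI ballI allI)
    fix x y :: "'a \<times> 'b" show "\<psi> (x+y) = \<psi> x + \<psi> y" unfolding \<psi>_def Jadd Uadd by (simp add: algebra_simps)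
  next
    fix c :: complex and x :: "'a \<times> 'b"
    define cx where "cx = (c *\<^sub>C fst x, c *\<^sub>C snd x)"
    have cx: "cx = Re c *\<^sub>R x + Im c *\<^sub>R J x" unfolding cx_def J_def by (rule scaleC_pair_decomp)
    have "J cx = ((\<i> * c) *\<^sub>C fst x, (\<i> * c) *\<^sub>C snd x)" unfolding J_def cx_def by (simp add: scaleC_scaleC)
    also have "\<dots> = Re (\<i> * c) *\<^sub>R x + Im (\<i> * c) *\<^sub>R J x" unfolding J_def by (rule scaleC_pair_decomp)
    finally have Jcx: "J cx = (- Im c) *\<^sub>R x + Re c *\<^sub>R J x" by simp
    have U1: "U cx = Re c * U x + Im c * U (J x)" unfolding cx Uadd Usc by simp
    have U2: "U (J cx) = - Im c * U x + Re c * U (J x)" unfolding Jcx Uadd Usc by simp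
    show "\<psi> (c *\<^sub>C fst x, c *\<^sub>C snd x) = c * \<psi> x"
      unfolding cx_def[symmetric] \<psi>_def U1 U2 by (simp add: complex_eq_iff algebra_simps)
  qed
  have psi_add: "\<psi> (x + y) = \<psi> x + \<psi> y" for x y using lin unfolding clinear_on_sum_def by blast
  have psi_bound: "cmod (\<psi> z) \<le> 2 * p z" for z
  proof -
    have "cmod (\<psi> z) \<le> cmod (complex_of_real (U z)) + cmod (\<i> * complex_of_real (U (J z)))"
      unfolding \<psi>_def by (rule norm_triangle_ineq4)
    also have "\<dots> = \<bar>U z\<bar> + \<bar>U (J z)\<bar>" by (simp add: norm_mult)
    also have "\<dots> \<le> p z + p (J z)" using Uabs[of z] Uabs[of "J z"] by linarith
    finally show ?thesis using pJ[of z] by simp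
  qed
  have cont: "dPhi_continuous_on \<Phi> UNIV \<psi>"
    unfolding dPhi_continuous_on_def
  proof (intro ballI allI impI)
    fix x :: "'a \<times> 'b" and e :: real assume e: "e > 0"
    show "\<exists>d>0. \<forall>y\<in>UNIV. dPhi \<Phi> x y < d \<longrightarrow> cmod (\<psi> y - \<psi> x) < e"
    proof (intro exI[of _ "e / (4*K)"] conjI ballI impI)
      show "e / (4*K) > 0" using e K by simp
      fix y assume dy: "dPhi \<Phi> x y < e / (4*K)"
      have "\<psi> y = \<psi> x + \<psi> (y - x)" using psi_add[of x "y - x"] by simp
      hence "cmod (\<psi> y - \<psi> x) = cmod (\<psi> (y - x))" by simp
      also have "\<dots> \<le> 2 * p (y - x)" by (rule psi_bound)
      also have "p (y - x) = K * (norm (fst x - fst y) + norm (snd x - snd y))"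
        unfolding p_def by (simp add: norm_minus_commute)
      also have "norm (fst x - fst y) + norm (snd x - snd y) \<le> 2 * dPhi \<Phi> x y"
        using dPhi_ge[OF YM, of x y] by simp
      finally have "cmod (\<psi> y - \<psi> x) \<le> 2 * (K * (2 * dPhi \<Phi> x y))" using K by simp
      also have "\<dots> = 4 * K * dPhi \<Phi> x y" by simp
      also have "\<dots> < e" using dy K by (simp add: field_simps)
      finally show "cmod (\<psi> y - \<psi> x) < e" .
    qed
  qed
  have agree: "\<psi> x = \<phi> x" if x: "x \<in> M" for x
  proof -
    have JM: "J x \<in> M" unfolding J_def using Msc[OF x] by blast
    have "U (J x) = Re (\<phi> (J x))" by (rule UM[OF JM])
    also have "\<phi> (J x) = \<i> * \<phi> x" unfolding J_def by (rule fsc[OF x])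
    finally have "U (J x) = - Im (\<phi> x)" by simp
    thus ?thesis unfolding \<psi>_def using UM[OF x] by (simp add: complex_eq_iff)
  qed
  show ?thesis using lin cont agree by blast
qed

end
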